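(* Let $m\geq 2$ be an integer, let $(\alpha_i)_{1\leq i\leq m}\in\left]0,1\right[^m$, and define $$\phi(\alpha_1,\ldots,\alpha_m)=\dfrac{1}{1+\dfrac{1}{\sum_{i=1}^m\dfrac{\alpha_i}{1-\alpha_i}}}.$$ Let $(\sigma_j)_{1\leq j\leq m}$ be the elementary symmetric polynomials in $(\alpha_i)_{1\leq i\leq m}$, i.e., $\sigma_j=\sum_{1\leq i_1<\cdots<i_j\leq m}\prod_{l=1}^j\alpha_{i_l}$ for every $j\in\{1,\ldots,m\}$. Then: (i) $\phi(\alpha_1,\ldots,\alpha_m)=\Big[\sum_{l=1}^{+\infty}\sum_{i=1}^{m}\alpha_{i}^{l}\Big]\Big/\Big[1+\sum_{l=1}^{+\infty}\sum_{i=1}^{m}\alpha_{i}^{l}\Big]$; (ii) $\phi(\alpha_1,\ldots,\alpha_m)=\Big[\sum_{j=1}^m(-1)^{j-1}j\sigma_j\Big]\Big/\Big[1+\sum_{j=2}^{m}(-1)^{j-1}(j-1)\sigma_j\Big]$; (iii) $\phi(\alpha_1,\ldots,\alpha_m)>\max_{1\leq i\leq m}\alpha_i$. *)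

theory Defs
  imports "HOL-Analysis.Analysis"
begin

definition phi :: "nat \<Rightarrow> (nat \<Rightarrow> real) \<Rightarrow> real" where
  "phi m \<alpha> = 1 / (1 + 1 / (\<Sum>i=1..m. \<alpha> i / (1 - \<alpha> i)))"

definition esym :: "nat \<Rightarrow> (nat \<Rightarrow> real) \<Rightarrow> nat \<Rightarrow> real" where
  "esym m \<alpha> j = (\<Sum>S\<in>{S. S \<subseteq> {1..m} \<and> card S = j}. \<Prod>i\<in>S. \<alpha> i)"

end

theory Submission
  imports Defs
begin

lemma pow_split:
  fixes f :: "nat set \<Rightarrow> real"
  assumes "finite A" "x \<notin> A"
  shows "(\<Sum>S\<in>Pow (insert x A). f S) = (\<Sum>S\<in>Pow A. f S) + (\<Sum>S\<in>Pow A. f (insert x S))"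
proof -
  have inj: "inj_on (insert x) (Pow A)" using assms(2) unfolding inj_on_def by (metis Diff_insert_absorb PowD subsetD)
  have "(\<Sum>S\<in>Pow (insert x A). f S) = (\<Sum>S\<in>Pow A. f S) + (\<Sum>S\<in>insert x ` Pow A. f S)"
    unfolding Pow_insert by (rule sum.union_disjoint) (use assms in auto)
  also have "(\<Sum>S\<in>insert x ` Pow A. f S) = (\<Sum>S\<in>Pow A. f (insert x S))"
    using sum.reindex[OF inj] by simp
  finally show ?thesis .
qed

lemma alt_sums:
  fixes a :: "nat \<Rightarrow> real"
  assumes "finite A"
  shows "(\<Sum>S\<in>Pow A. (-1)^card S * (\<Prod>i\<in>S. a i)) = (\<Prod>i\<in>A. 1 - a i)
       \<and> (\<Sum>S\<in>Pow A. (-1)^card S * real (card S) * (\<Prod>i\<in>S. a i))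
          = - (\<Sum>i\<in>A. a i * (\<Prod>k\<in>A-{i}. 1 - a k))"
  using assms
proof (induction A rule: finite_induct)
  case empty
  then show ?case by simp
next
  case (insert x A)
  have fin: "\<And>S. S \<in> Pow A \<Longrightarrow> finite S \<and> x \<notin> S" using insert.hyps finite_subset by blast
  have P1: "(\<Sum>S\<in>Pow (insert x A). (-1)^card S * (\<Prod>i\<in>S. a i))
      = (\<Sum>S\<in>Pow A. (-1)^card S * (\<Prod>i\<in>S. a i)) + (\<Sum>S\<in>Pow A. (-1)^card (insert x S) * (\<Prod>i\<in>insert x S. a i))"
    by (rule pow_split[OF insert.hyps])
  have P2: "(\<Sum>S\<in>Pow A. (-1)^card (insert x S) * (\<Prod>i\<in>insert x S. a i))
       = - a x * (\<Sum>S\<in>Pow A. (-1)^card S * (\<Prod>i\<in>S. a i))"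
    unfolding sum_distrib_left by (rule sum.cong) (auto simp: fin)
  have G1: "(\<Sum>S\<in>Pow (insert x A). (-1)^card S * real (card S) * (\<Prod>i\<in>S. a i))
      = (\<Sum>S\<in>Pow A. (-1)^card S * real (card S) * (\<Prod>i\<in>S. a i)) + (\<Sum>S\<in>Pow A. (-1)^card (insert x S) * real (card (insert x S)) * (\<Prod>i\<in>insert x S. a i))"
    by (rule pow_split[OF insert.hyps])
  have G2: "(\<Sum>S\<in>Pow A. (-1)^card (insert x S) * real (card (insert x S)) * (\<Prod>i\<in>insert x S. a i))
       = - a x * (\<Sum>S\<in>Pow A. (-1)^card S * real (card S) * (\<Prod>i\<in>S. a i))
         - a x * (\<Sum>S\<in>Pow A. (-1)^card S * (\<Prod>i\<in>S. a i))"
    unfolding sum_distrib_left sum_subtractf[symmetric] by (rule sum.cong) (auto simp: fin algebra_simps)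
  have R: "(\<Sum>i\<in>insert x A. a i * (\<Prod>k\<in>insert x A-{i}. 1 - a k))
     = a x * (\<Prod>k\<in>A. 1 - a k) + (1 - a x) * (\<Sum>i\<in>A. a i * (\<Prod>k\<in>A-{i}. 1 - a k))"
  proof -
    have "(\<Sum>i\<in>insert x A. a i * (\<Prod>k\<in>insert x A-{i}. 1 - a k))
        = a x * (\<Prod>k\<in>insert x A-{x}. 1 - a k) + (\<Sum>i\<in>A. a i * (\<Prod>k\<in>insert x A-{i}. 1 - a k))"
      using insert.hyps by simp
    also have "(\<Prod>k\<in>insert x A-{x}. 1 - a k) = (\<Prod>k\<in>A. 1 - a k)"
      using insert.hyps by (simp add: Diff_insert_absorb)
    also have "(\<Sum>i\<in>A. a i * (\<Prod>k\<in>insert x A-{i}. 1 - a k)) = (1 - a x) * (\<Sum>i\<in>A. a i * (\<Prod>k\<in>A-{i}. 1 - a k))"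
      unfolding sum_distrib_left
    proof (rule sum.cong)
      fix i assume "i \<in> A"
      then have "insert x A - {i} = insert x (A - {i})" "x \<notin> A - {i}" using insert.hyps by auto
      then show "a i * (\<Prod>k\<in>insert x A-{i}. 1 - a k) = (1 - a x) * (a i * (\<Prod>k\<in>A-{i}. 1 - a k))"
        using insert.hyps by simp
    qed simp
    finally show ?thesis .
  qed
  show ?case using insert.IH insert.hyps P1 P2 G1 G2 R by (simp add: algebra_simps)
qed

lemma esym_sum:
  fixes h :: "nat \<Rightarrow> real"
  shows "(\<Sum>j=0..m. h j * esym m a j) = (\<Sum>S\<in>Pow {1..m}. h (card S) * (\<Prod>i\<in>S. a i))"
proof -
  have "(\<Sum>j=0..m. h j * esym m a j) = (\<Sum>j=0..m. \<Sum>S\<in>{S\<in>Pow {1..m}. card S = j}. h (card S) * (\<Prod>i\<in>S. a i))"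
    unfolding esym_def sum_distrib_left
    by (rule sum.cong) (auto intro!: sum.cong)
  also have "\<dots> = (\<Sum>S\<in>Pow {1..m}. h (card S) * (\<Prod>i\<in>S. a i))"
  proof (rule sum.group)
    show "card ` Pow {1..m} \<subseteq> {0..m}"
      using card_mono[of "{1..m}"] by fastforce
  qed auto
  finally show ?thesis .
qed

theorem proposition2p6:
  fixes m :: nat and \<alpha> :: "nat \<Rightarrow> real"
  assumes "m \<ge> 2"
    and "\<And>i. i \<in> {1..m} \<Longrightarrow> 0 < \<alpha> i \<and> \<alpha> i < 1"
  shows "(summable (\<lambda>l. \<Sum>i=1..m. \<alpha> i ^ Suc l)
          \<and> phi m \<alpha> = (\<Sum>l. \<Sum>i=1..m. \<alpha> i ^ Suc l) / (1 + (\<Sum>l. \<Sum>i=1..m. \<alpha> i ^ Suc l)))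
       \<and> phi m \<alpha> = (\<Sum>j=1..m. (-1) ^ (j - 1) * real j * esym m \<alpha> j)
                 / (1 + (\<Sum>j=2..m. (-1) ^ (j - 1) * real (j - 1) * esym m \<alpha> j))
       \<and> phi m \<alpha> > (MAX i\<in>{1..m}. \<alpha> i)"
proof -
  define S where "S = (\<Sum>i=1..m. \<alpha> i / (1 - \<alpha> i))"
  have a0: "\<And>i. i \<in> {1..m} \<Longrightarrow> 0 < \<alpha> i" and a1: "\<And>i. i \<in> {1..m} \<Longrightarrow> \<alpha> i < 1"
    using assms(2) by auto
  have tpos: "\<And>i. i \<in> {1..m} \<Longrightarrow> \<alpha> i / (1 - \<alpha> i) > 0" using a0 a1 by simp
  have Spos: "S > 0" unfolding S_def using assms(1) tpos by (intro sum_pos) auto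
  have phiS: "phi m \<alpha> = S / (1 + S)"
    unfolding phi_def S_def[symmetric] using Spos by (simp add: field_simps)
  have geo: "\<And>i. i \<in> {1..m} \<Longrightarrow> (\<lambda>l. \<alpha> i ^ Suc l) sums (\<alpha> i / (1 - \<alpha> i))"
  proof -
    fix i assume i: "i \<in> {1..m}"
    have "norm (\<alpha> i) < 1" using a0[OF i] a1[OF i] by simp
    from sums_mult[OF geometric_sums[OF this], of "\<alpha> i"]
    show "(\<lambda>l. \<alpha> i ^ Suc l) sums (\<alpha> i / (1 - \<alpha> i))" by (simp add: field_simps)
  qed
  have sS: "(\<lambda>l. \<Sum>i=1..m. \<alpha> i ^ Suc l) sums S"
    unfolding S_def by (rule sums_sum) (use geo in auto)
  have p1: "summable (\<lambda>l. \<Sum>i=1..m. \<alpha> i ^ Suc l)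
          \<and> phi m \<alpha> = (\<Sum>l. \<Sum>i=1..m. \<alpha> i ^ Suc l) / (1 + (\<Sum>l. \<Sum>i=1..m. \<alpha> i ^ Suc l))"
    using sS sums_unique[OF sS] phiS by (auto simp: sums_iff)
  define Q where "Q = (\<Prod>i\<in>{1..m}. 1 - \<alpha> i)"
  have Qpos: "Q > 0" unfolding Q_def using a1 by (intro prod_pos) auto
  have QS: "Q * S = (\<Sum>i\<in>{1..m}. \<alpha> i * (\<Prod>k\<in>{1..m}-{i}. 1 - \<alpha> k))"
    unfolding S_def sum_distrib_left
  proof (rule sum.cong)
    fix i assume i: "i \<in> {1..m}"
    have hQ: "Q = (1 - \<alpha> i) * (\<Prod>k\<in>{1..m}-{i}. 1 - \<alpha> k)"
      unfolding Q_def using i by (simp add: prod.remove)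
    have "1 - \<alpha> i \<noteq> 0" using a1[OF i] by simp
    then show "Q * (\<alpha> i / (1 - \<alpha> i)) = \<alpha> i * (\<Prod>k\<in>{1..m}-{i}. 1 - \<alpha> k)"
      unfolding hQ by (simp add: field_simps)
  qed simp
  note AS = alt_sums[of "{1..m}" \<alpha>, simplified]
  have N: "(\<Sum>j=1..m. (-1) ^ (j - 1) * real j * esym m \<alpha> j) = Q * S"
  proof -
    have "(\<Sum>j=1..m. (-1) ^ (j - 1) * real j * esym m \<alpha> j)
        = (\<Sum>j=0..m. (- ((-1) ^ j * real j)) * esym m \<alpha> j)"
      by (subst sum.atLeast_Suc_atMost[of 0 m]) (auto intro!: sum.cong simp: power_eq_if)
    also have "\<dots> = - (\<Sum>S\<in>Pow {1..m}. (-1)^card S * real (card S) * (\<Prod>i\<in>S. \<alpha> i))"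
      unfolding esym_sum by (simp add: sum_negf[symmetric])
    finally show ?thesis using AS QS by simp
  qed
  have D: "1 + (\<Sum>j=2..m. (-1) ^ (j - 1) * real (j - 1) * esym m \<alpha> j) = Q + Q * S"
  proof -
    have "{S. S \<subseteq> {1..m} \<and> card S = 0} = {{}}"
      using finite_subset[of _ "{1..m}"] by (auto simp: card_eq_0_iff)
    then have e0: "esym m \<alpha> 0 = 1" unfolding esym_def by simp
    have "(\<Sum>j=0..m. ((-1) ^ j * (1 - real j)) * esym m \<alpha> j)
        = 1 + (\<Sum>j=1..m. ((-1) ^ j * (1 - real j)) * esym m \<alpha> j)"
      by (subst sum.atLeast_Suc_atMost[of 0 m]) (auto simp: e0)
    also have "(\<Sum>j=1..m. ((-1) ^ j * (1 - real j)) * esym m \<alpha> j)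
        = (\<Sum>j=2..m. ((-1) ^ j * (1 - real j)) * esym m \<alpha> j)"
      using assms(1) by (subst sum.atLeast_Suc_atMost[of 1 m]) (auto simp: numeral_2_eq_2)
    also have "\<dots> = (\<Sum>j=2..m. (-1) ^ (j - 1) * real (j - 1) * esym m \<alpha> j)"
    proof (rule sum.cong)
      fix j assume "j \<in> {2..m}"
      then obtain k where k: "j = Suc k" by (cases j) auto
      show "((-1) ^ j * (1 - real j)) * esym m \<alpha> j = (-1) ^ (j - 1) * real (j - 1) * esym m \<alpha> j"
        unfolding k by (simp add: algebra_simps)
    qed simp
    finally have "1 + (\<Sum>j=2..m. (-1) ^ (j - 1) * real (j - 1) * esym m \<alpha> j)
       = (\<Sum>j=0..m. ((-1) ^ j * (1 - real j)) * esym m \<alpha> j)" by simp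
    also have "\<dots> = (\<Sum>S\<in>Pow {1..m}. (-1)^card S * (\<Prod>i\<in>S. \<alpha> i))
          - (\<Sum>S\<in>Pow {1..m}. (-1)^card S * real (card S) * (\<Prod>i\<in>S. \<alpha> i))"
      unfolding esym_sum sum_subtractf[symmetric] by (rule sum.cong) (auto simp: algebra_simps)
    finally show ?thesis using AS QS Q_def by simp
  qed
  have p2: "phi m \<alpha> = (\<Sum>j=1..m. (-1) ^ (j - 1) * real j * esym m \<alpha> j)
                 / (1 + (\<Sum>j=2..m. (-1) ^ (j - 1) * real (j - 1) * esym m \<alpha> j))"
  proof -
    have "Q + Q * S = Q * (1 + S)" by (simp add: algebra_simps)
    moreover have "(Q * S) / (Q * (1 + S)) = S / (1 + S)"
      using Qpos by (intro mult_divide_mult_cancel_left) simp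
    ultimately show ?thesis by (simp only: N D phiS)
  qed
  have "(MAX i\<in>{1..m}. \<alpha> i) \<in> \<alpha> ` {1..m}"
    by (rule Max_in) (use assms(1) in auto)
  then obtain k where k: "k \<in> {1..m}" "(MAX i\<in>{1..m}. \<alpha> i) = \<alpha> k"
    by (metis imageE)
  have ne: "{1..m} - {k} \<noteq> {}"
  proof
    assume "{1..m} - {k} = {}"
    then have "{1..m} \<subseteq> {k}" by blast
    then have "card {1..m} \<le> card {k}" by (intro card_mono) auto
    then show False using assms(1) by simp
  qed
  have "S = \<alpha> k / (1 - \<alpha> k) + (\<Sum>i\<in>{1..m}-{k}. \<alpha> i / (1 - \<alpha> i))"
    unfolding S_def using k(1) by (simp add: sum.remove)
  moreover have "(\<Sum>i\<in>{1..m}-{k}. \<alpha> i / (1 - \<alpha> i)) > 0"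
    using ne tpos by (intro sum_pos) auto
  ultimately have "S > \<alpha> k / (1 - \<alpha> k)" by simp
  then have "S * (1 - \<alpha> k) > \<alpha> k" using a1[OF k(1)] by (simp add: field_simps)
  then have p3: "phi m \<alpha> > (MAX i\<in>{1..m}. \<alpha> i)"
    unfolding phiS k(2) using Spos by (simp add: field_simps)
  show ?thesis using p1 p2 p3 by blast
qed

end
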